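(* Let $\Delta:\mathcal{H}\to\mathcal{H}\otimes\mathcal{H}$ be the unique algebra morphism from $(\mathcal{H},\cdot)$ to $(\mathcal{H}\otimes\mathcal{H},\cdot_\varepsilon)$ such that $\Delta\circ B^+=(\mathrm{Id}\otimes B^+ + B^+\otimes(\nu\circ\varepsilon))\circ\Delta$. Then $(\mathcal{H},\cdot,\Delta,\varepsilon)$ is an infinitesimal bialgebra, and it is graded by the weight, i.e. $\Delta(\mathcal{H}_n)\subseteq\bigoplus_{i+j=n}\mathcal{H}_i\otimes\mathcal{H}_j$ for all $n$.
   Context: Let $K$ be a field. A planar rooted tree is a rooted tree in which the children of every vertex are linearly ordered (left to right). A planar forest is a finite, possibly empty, sequence $t_1\cdots t_n$ of planar rooted trees; the empty forest is denoted $1$, and the weight of a forest is its number of vertices. $\mathcal{H}$ is the free associative unital $K$-algebra generated by the set of planar rooted trees; its monomials are the planar forests, which form a basis, and the product is concatenation. $\mathcal{H}_n$ is the span of forests of weight $n$. $B^+:\mathcal{H}\to\mathcal{H}$ is the linear map sending a forest $F$ to the tree obtained by grafting the roots of the trees of $F$ (in their order) on a new common root ($B^+(1)$ is the one-vertex tree). $\varepsilon:\mathcal{H}\to K$ is the algebra morphism with $\varepsilon(F)=\delta_{F,1}$ for forests $F$, and $\nu:K\to\mathcal{H}$, $\lambda\mapsto\lambda 1$. The product $\cdot_\varepsilon$ on $\mathcal{H}\otimes\mathcal{H}$ is $(a_1\otimes b_1)\cdot_\varepsilon(a_2\otimes b_2)=\varepsilon(a_2)\,a_1\otimes b_1b_2+\varepsilon(b_1)\,a_1a_2\otimes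 b_2-\varepsilon(a_2)\varepsilon(b_1)\,a_1\otimes b_2$; it is associative with unit $1\otimes 1$. Since $(\mathcal{H},B^+)$ is initial among algebras with a linear endomorphism, the algebra morphism $\Delta$ above exists and is unique. An infinitesimal bialgebra is an associative unital algebra $A$ with a coassociative counital coproduct $\Delta$ (counit $\varepsilon$) such that $\Delta(ab)=\Delta(a)(1\otimes b)+(a\otimes 1)\Delta(b)-a\otimes b$ for all $a,b\in A$. *)

theory Defs
  imports "HOL-Library.Poly_Mapping"
begin

datatype ptree = PNode "ptree list"   \<comment> \<open>children ordered left to right\<close>

type_synonym forest = "ptree list"    \<comment> \<open>the empty forest [] is the unit 1\<close>

fun tsize :: "ptree \<Rightarrow> nat" where
  "tsize (PNode ts) = Suc (sum_list (map tsize ts))"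

definition weight :: "forest \<Rightarrow> nat" where
  "weight F = sum_list (map tsize F)"

type_synonym 'k H = "forest \<Rightarrow>\<^sub>0 'k"
type_synonym 'k H2 = "(forest \<times> forest) \<Rightarrow>\<^sub>0 'k"
type_synonym 'k H3 = "(forest \<times> forest \<times> forest) \<Rightarrow>\<^sub>0 'k"

definition smul :: "'k::field \<Rightarrow> ('a \<Rightarrow>\<^sub>0 'k) \<Rightarrow> ('a \<Rightarrow>\<^sub>0 'k)" where
  "smul c a = Poly_Mapping.map (\<lambda>x. c * x) a"

definition linear_map :: "(('a \<Rightarrow>\<^sub>0 'k::field) \<Rightarrow> ('b \<Rightarrow>\<^sub>0 'k)) \<Rightarrow> bool" where
  "linear_map \<phi> \<longleftrightarrow> (\<forall>a b. \<phi> (a + b) = \<phi> a + \<phi> b) \<and> (\<forall>c a. \<phi> (smul c a) = smul c (\<phi> a))"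

definition lext :: "('a \<Rightarrow> ('b \<Rightarrow>\<^sub>0 'k::field)) \<Rightarrow> ('a \<Rightarrow>\<^sub>0 'k) \<Rightarrow> ('b \<Rightarrow>\<^sub>0 'k)" where
  "lext \<phi> a = (\<Sum>x\<in>Poly_Mapping.keys a. smul (Poly_Mapping.lookup a x) (\<phi> x))"

definition basisH :: "forest \<Rightarrow> 'k::field H" where
  "basisH F = Poly_Mapping.single F 1"

definition hmult :: "'k::field H \<Rightarrow> 'k H \<Rightarrow> 'k H" where
  "hmult a b = lext (\<lambda>F. lext (\<lambda>G. basisH (F @ G)) b) a"

definition unitH :: "'k::field H" where
  "unitH = basisH []"

definition epsH :: "'k::field H \<Rightarrow> 'k" where
  "epsH a = Poly_Mapping.lookup a []"

definition nu :: "'k::field \<Rightarrow> 'k H" where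
  "nu c = smul c unitH"

definition Bplus :: "'k::field H \<Rightarrow> 'k H" where
  "Bplus = lext (\<lambda>F. basisH [PNode F])"

definition tens :: "'k::field H \<Rightarrow> 'k H \<Rightarrow> 'k H2" where
  "tens a b = lext (\<lambda>F. lext (\<lambda>G. Poly_Mapping.single (F, G) 1) b) a"

definition tmap :: "('k::field H \<Rightarrow> 'k H) \<Rightarrow> ('k H \<Rightarrow> 'k H) \<Rightarrow> 'k H2 \<Rightarrow> 'k H2" where
  "tmap \<phi> \<psi> = lext (\<lambda>(F, G). tens (\<phi> (basisH F)) (\<psi> (basisH G)))"

definition tprod :: "'k::field H2 \<Rightarrow> 'k H2 \<Rightarrow> 'k H2" where
  "tprod X Y = lext (\<lambda>(F1, G1). lext (\<lambda>(F2, G2).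
      tens (hmult (basisH F1) (basisH F2)) (hmult (basisH G1) (basisH G2))) Y) X"

definition teps_mult :: "'k::field H2 \<Rightarrow> 'k H2 \<Rightarrow> 'k H2" where
  "teps_mult X Y = lext (\<lambda>(F1, G1). lext (\<lambda>(F2, G2).
      let a1 = basisH F1; b1 = basisH G1; a2 = basisH F2; b2 = basisH G2 in
        smul (epsH a2) (tens a1 (hmult b1 b2))
      + smul (epsH b1) (tens (hmult a1 a2) b2)
      - smul (epsH a2 * epsH b1) (tens a1 b2)) Y) X"

definition delta_id :: "('k::field H \<Rightarrow> 'k H2) \<Rightarrow> 'k H2 \<Rightarrow> 'k H3" where
  "delta_id \<Delta> = lext (\<lambda>(F, G). lext (\<lambda>(F1, F2). Poly_Mapping.single (F1, F2, G) 1) (\<Delta> (basisH F)))"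

definition id_delta :: "('k::field H \<Rightarrow> 'k H2) \<Rightarrow> 'k H2 \<Rightarrow> 'k H3" where
  "id_delta \<Delta> = lext (\<lambda>(F, G). lext (\<lambda>(G1, G2). Poly_Mapping.single (F, G1, G2) 1) (\<Delta> (basisH G)))"

text \<open>(\<epsilon> \<otimes> Id) and (Id \<otimes> \<epsilon>) : H \<otimes> H \<rightarrow> H (identifying K \<otimes> H = H = H \<otimes> K).\<close>
definition eps_id :: "'k::field H2 \<Rightarrow> 'k H" where
  "eps_id = lext (\<lambda>(F, G). smul (epsH (basisH F)) (basisH G))"

definition id_eps :: "'k::field H2 \<Rightarrow> 'k H" where
  "id_eps = lext (\<lambda>(F, G). smul (epsH (basisH G)) (basisH F))"

definition is_Delta :: "('k::field H \<Rightarrow> 'k H2) \<Rightarrow> bool" where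
  "is_Delta \<Delta> \<longleftrightarrow> linear_map \<Delta>
     \<and> \<Delta> unitH = tens unitH unitH
     \<and> (\<forall>a b. \<Delta> (hmult a b) = teps_mult (\<Delta> a) (\<Delta> b))
     \<and> (\<forall>a. \<Delta> (Bplus a) = tmap id Bplus (\<Delta> a) + tmap Bplus (nu \<circ> epsH) (\<Delta> a))"

definition inf_bialgebra :: "('k::field H \<Rightarrow> 'k H2) \<Rightarrow> bool" where
  "inf_bialgebra \<Delta> \<longleftrightarrow>
     (\<forall>a b c :: 'k H. hmult (hmult a b) c = hmult a (hmult b c))
     \<and> (\<forall>a :: 'k H. hmult unitH a = a \<and> hmult a unitH = a)
     \<and> linear_map \<Delta>
     \<and> (\<forall>a. delta_id \<Delta> (\<Delta> a) = id_delta \<Delta> (\<Delta> a))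
     \<and> (\<forall>a. eps_id (\<Delta> a) = a \<and> id_eps (\<Delta> a) = a)
     \<and> (\<forall>a b. \<Delta> (hmult a b) = tprod (\<Delta> a) (tens unitH b) + tprod (tens a unitH) (\<Delta> b) - tens a b)"

definition weight_graded :: "('k::field H \<Rightarrow> 'k H2) \<Rightarrow> bool" where
  "weight_graded \<Delta> \<longleftrightarrow> (\<forall>n a. (\<forall>F\<in>Poly_Mapping.keys a. weight F = n) \<longrightarrow>
       (\<forall>p\<in>Poly_Mapping.keys (\<Delta> a). weight (fst p) + weight (snd p) = n))"

end

theory Submission
  imports Defs "HOL-Library.Multiset"
begin


lemma lookup_smul[simp]: "Poly_Mapping.lookup (smul c a) x = c * Poly_Mapping.lookup a x"
  unfolding smul_def by (simp add: Poly_Mapping.map.rep_eq when_def)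

lemma smul_add_r: "smul c (a + b) = smul c a + smul c b"
  by (rule poly_mapping_eqI) (simp add: lookup_add algebra_simps)
lemma smul_add_l: "smul (c + d) a = smul c a + smul d a"
  by (rule poly_mapping_eqI) (simp add: lookup_add algebra_simps)
lemma smul_smul[simp]: "smul c (smul d a) = smul (c * d) a"
  by (rule poly_mapping_eqI) (simp add: algebra_simps)
lemma smul_one[simp]: "smul 1 a = a"
  by (rule poly_mapping_eqI) simp
lemma smul_zero_l[simp]: "smul 0 a = 0"
  by (rule poly_mapping_eqI) simp
lemma smul_zero_r[simp]: "smul c 0 = 0"
  by (rule poly_mapping_eqI) simp
lemma smul_uminus_r: "smul c (- a) = - smul c a"
  by (rule poly_mapping_eqI) simp
lemma smul_diff_r: "smul c (a - b) = smul c a - smul c b"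
  by (rule poly_mapping_eqI) (simp add: lookup_minus algebra_simps)
lemma smul_diff_l: "smul (c - d) a = smul c a - smul d a"
  by (rule poly_mapping_eqI) (simp add: lookup_minus algebra_simps)
lemma smul_single[simp]: "smul c (Poly_Mapping.single x d) = Poly_Mapping.single x (c * d)"
  by (rule poly_mapping_eqI) (simp add: lookup_single when_def)
lemma smul_sum: "smul c (sum f A) = sum (\<lambda>x. smul c (f x)) A"
  by (induction A rule: infinite_finite_induct) (auto simp: smul_add_r)
lemma smul_sum_list: "smul c (sum_list xs) = sum_list (map (smul c) xs)"
  by (induction xs) (auto simp: smul_add_r)

lemma lext_eq_sum:
  assumes "finite A" "Poly_Mapping.keys a \<subseteq> A"
  shows "lext \<phi> a = (\<Sum>x\<in>A. smul (Poly_Mapping.lookup a x) (\<phi> x))"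
  unfolding lext_def
  by (rule sum.mono_neutral_left) (use assms in \<open>auto simp: in_keys_iff\<close>)

lemma lext_add: "lext \<phi> (a + b) = lext \<phi> a + lext \<phi> b"
proof -
  let ?A = "Poly_Mapping.keys a \<union> Poly_Mapping.keys b"
  have "lext \<phi> (a+b) = (\<Sum>x\<in>?A. smul (Poly_Mapping.lookup (a+b) x) (\<phi> x))"
    by (rule lext_eq_sum) (auto simp: keys_add)
  also have "\<dots> = (\<Sum>x\<in>?A. smul (Poly_Mapping.lookup a x) (\<phi> x)) + (\<Sum>x\<in>?A. smul (Poly_Mapping.lookup b x) (\<phi> x))"
    by (simp add: lookup_add smul_add_l sum.distrib)
  also have "\<dots> = lext \<phi> a + lext \<phi> b"
    using lext_eq_sum[of ?A a \<phi>] lext_eq_sum[of ?A b \<phi>] by auto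
  finally show ?thesis .
qed

lemma lext_smul: "lext \<phi> (smul c a) = smul c (lext \<phi> a)"
proof -
  have "lext \<phi> (smul c a) = (\<Sum>x\<in>Poly_Mapping.keys a. smul (Poly_Mapping.lookup (smul c a) x) (\<phi> x))"
    by (rule lext_eq_sum) (auto simp: in_keys_iff)
  also have "\<dots> = smul c (lext \<phi> a)"
    by (simp add: lext_def smul_sum)
  finally show ?thesis .
qed

lemma lext_zero[simp]: "lext \<phi> 0 = 0"
  by (simp add: lext_def)

lemma lext_single[simp]: "lext \<phi> (Poly_Mapping.single x c) = smul c (\<phi> x)"
  by (cases "c = 0") (auto simp: lext_def)

lemma lext_uminus: "lext \<phi> (- a) = - lext \<phi> a"
  by (metis add_eq_0_iff lext_add lext_zero add.right_inverse)
lemma lext_diff: "lext \<phi> (a - b) = lext \<phi> a - lext \<phi> b"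
  by (metis diff_conv_add_uminus lext_add lext_uminus)

lemma lext_fun_add: "lext (\<lambda>x. \<phi> x + \<psi> x) a = lext \<phi> a + lext \<psi> a"
  by (simp add: lext_def smul_add_r sum.distrib)
lemma lext_fun_diff: "lext (\<lambda>x. \<phi> x - \<psi> x) a = lext \<phi> a - lext \<psi> a"
  by (simp add: lext_def smul_diff_r sum_subtractf)
lemma lext_fun_smul: "lext (\<lambda>x. smul c (\<phi> x)) a = smul c (lext \<phi> a)"
  by (simp add: lext_def smul_sum mult.commute)
lemma lext_fun_zero[simp]: "lext (\<lambda>x. 0) a = 0"
  by (simp add: lext_def)
lemma lext_cong: "(\<And>x. x \<in> Poly_Mapping.keys a \<Longrightarrow> \<phi> x = \<psi> x) \<Longrightarrow> lext \<phi> a = lext \<psi> a"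
  by (simp add: lext_def)

lemma linear_lext: "linear_map (lext \<phi>)"
  by (simp add: linear_map_def lext_add lext_smul)

lemma linear_zero: "linear_map \<phi> \<Longrightarrow> \<phi> 0 = 0"
  unfolding linear_map_def by (metis add_cancel_right_right add_0)

lemma linear_sum: "linear_map \<phi> \<Longrightarrow> \<phi> (sum f A) = (\<Sum>x\<in>A. \<phi> (f x))"
  by (induction A rule: infinite_finite_induct) (auto simp: linear_zero linear_map_def)

lemma linear_sum_list: "linear_map \<phi> \<Longrightarrow> \<phi> (sum_list xs) = sum_list (map \<phi> xs)"
  by (induction xs) (auto simp: linear_zero linear_map_def)

lemma linear_diff: "linear_map \<phi> \<Longrightarrow> \<phi> (a - b) = \<phi> a - \<phi> b"
  unfolding linear_map_def by (metis add_diff_cancel diff_add_cancel)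

lemma lext_basis: "lext (\<lambda>x. Poly_Mapping.single x 1) a = a"
  unfolding lext_def by (rule poly_mapping_eqI) (simp add: lookup_sum lookup_single when_def in_keys_iff)

lemma single_as_smul: "Poly_Mapping.single x c = smul c (Poly_Mapping.single x 1)"
  by simp

lemma linear_repr: "linear_map \<phi> \<Longrightarrow> \<phi> a = lext (\<lambda>x. \<phi> (Poly_Mapping.single x 1)) a"
proof -
  assume l: "linear_map \<phi>"
  have "\<phi> a = \<phi> (lext (\<lambda>x. Poly_Mapping.single x 1) a)" by (simp add: lext_basis)
  also have "\<dots> = lext (\<lambda>x. \<phi> (Poly_Mapping.single x 1)) a"
    unfolding lext_def using l
  proof (simp add: linear_sum)
    show "(\<Sum>x\<in>Poly_Mapping.keys a. \<phi> (Poly_Mapping.single x (Poly_Mapping.lookup a x))) =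
      (\<Sum>x\<in>Poly_Mapping.keys a. smul (Poly_Mapping.lookup a x) (\<phi> (Poly_Mapping.single x 1)))"
    proof (rule sum.cong[OF refl])
      fix x
      have e1: "\<phi> (Poly_Mapping.single x (Poly_Mapping.lookup a x)) = \<phi> (smul (Poly_Mapping.lookup a x) (Poly_Mapping.single x 1))"
        by simp
      have e2: "\<phi> (smul (Poly_Mapping.lookup a x) (Poly_Mapping.single x 1)) = smul (Poly_Mapping.lookup a x) (\<phi> (Poly_Mapping.single x 1))"
        using l unfolding linear_map_def by blast
      show "\<phi> (Poly_Mapping.single x (Poly_Mapping.lookup a x)) = smul (Poly_Mapping.lookup a x) (\<phi> (Poly_Mapping.single x 1))"
        by (rule trans[OF e1 e2])
    qed
  qed
  finally show ?thesis .
qed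

lemma linear_eq:
  assumes "linear_map \<phi>" "linear_map \<psi>" "\<And>x. \<phi> (Poly_Mapping.single x 1) = \<psi> (Poly_Mapping.single x 1)"
  shows "\<phi> a = \<psi> a"
proof -
  have "\<phi> a = lext (\<lambda>x. \<phi> (Poly_Mapping.single x 1)) a" by (rule linear_repr) fact
  also have "\<dots> = lext (\<lambda>x. \<psi> (Poly_Mapping.single x 1)) a" using assms(3) by simp
  also have "\<dots> = \<psi> a" by (rule linear_repr[symmetric]) fact
  finally show ?thesis .
qed

lemma lext_compose: "linear_map \<psi> \<Longrightarrow> \<psi> (lext \<phi> a) = lext (\<lambda>x. \<psi> (\<phi> x)) a"
  unfolding lext_def by (simp add: linear_sum linear_map_def)

lemma linear_comp: "linear_map \<phi> \<Longrightarrow> linear_map \<psi> \<Longrightarrow> linear_map (\<lambda>x. \<phi> (\<psi> x))"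
  by (simp add: linear_map_def)



fun P :: "forest \<Rightarrow> (forest \<times> forest) list" where
  "P [] = []"
| "P (PNode G # F) = map (\<lambda>p. (fst p, snd p @ F)) (([PNode G],[]) # map (\<lambda>p. (fst p, [PNode (snd p)])) (P G))
     @ map (\<lambda>p. (PNode G # fst p, snd p)) (P F)"

definition Dl :: "forest \<Rightarrow> (forest \<times> forest) list" where
  "Dl F = ([],F) # P F"

lemma P_single: "P [PNode G] = ([PNode G],[]) # map (\<lambda>p. (fst p, [PNode (snd p)])) (P G)"
  by (simp add: comp_def)

lemma P_fst_ne: "p \<in> set (P F) \<Longrightarrow> fst p \<noteq> []"
  by (induction F arbitrary: p rule: P.induct) auto

lemma P_append: "P (F @ G) = map (\<lambda>p. (fst p, snd p @ G)) (P F) @ map (\<lambda>p. (F @ fst p, snd p)) (P G)"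
proof (induction F)
  case Nil then show ?case by (simp add: comp_def)
next
  case (Cons t F)
  then show ?case by (cases t) (simp add: comp_def)
qed

lemma Dl_filter_snd: "filter (\<lambda>p. snd p = []) (Dl F) = [(F,[])]"
proof (induction F rule: P.induct)
  case 1 then show ?case by (simp add: Dl_def)
next
  case (2 G F)
  have f: "filter (\<lambda>p. snd p = []) (P F) = (if F = [] then [] else [(F,[])])"
    using 2(2) by (auto simp: Dl_def split: if_splits)
  have g: "filter (\<lambda>p. snd p = []) (map (\<lambda>p. (fst p, [PNode (snd p)])) (P G)) = []"
    by (simp add: filter_empty_conv)
  show ?case using f g by (simp add: Dl_def comp_def filter_map)
qed

lemma weight_append[simp]: "weight (F @ G) = weight F + weight G"
  by (simp add: weight_def)
lemma weight_Nil[simp]: "weight [] = 0" by (simp add: weight_def)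
lemma weight_Cons[simp]: "weight (t # F) = tsize t + weight F" by (simp add: weight_def)

lemma P_weight: "p \<in> set (P F) \<Longrightarrow> weight (fst p) + weight (snd p) = weight F"
  by (induction F arbitrary: p rule: P.induct) (auto simp flip: weight_def)

lemma Dl_weight: "p \<in> set (Dl F) \<Longrightarrow> weight (fst p) + weight (snd p) = weight F"
  by (auto simp: Dl_def P_weight)

definition LL :: "forest \<Rightarrow> (forest \<times> forest \<times> forest) list" where
  "LL F = concat (map (\<lambda>p. map (\<lambda>q. (fst q, snd q, snd p)) (P (fst p))) (P F))"
definition RR :: "forest \<Rightarrow> (forest \<times> forest \<times> forest) list" where
  "RR F = concat (map (\<lambda>p. map (\<lambda>q. (fst p, fst q, snd q)) (Dl (snd p))) (P F))"

lemma mset_concat_app: "mset (concat (map (\<lambda>x. A x @ B x) xs)) = mset (concat (map A xs)) + mset (concat (map B xs))"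
  by (induction xs) auto
lemma mset_concat_cons: "mset (concat (map (\<lambda>x. y x # A x) xs)) = mset (map y xs) + mset (concat (map A xs))"
  by (induction xs) auto
lemma mset_swap: "mset (concat (map (\<lambda>x. map (f x) ys) xs)) = mset (concat (map (\<lambda>y. map (\<lambda>x. f x y) xs) ys))"
proof (induction xs)
  case Nil then show ?case by (induction ys) auto
next
  case (Cons x xs)
  then show ?case using mset_concat_cons[of "\<lambda>y. f x y" "\<lambda>y. map (\<lambda>x. f x y) xs" ys] by simp
qed

lemma LL_append: "mset (LL (F @ G)) = image_mset (\<lambda>x. (fst x, fst (snd x), snd (snd x) @ G)) (mset (LL F))
   + mset (concat (map (\<lambda>p. map (\<lambda>q. (fst q, snd q @ fst p, snd p)) (P F)) (P G)))
   + image_mset (\<lambda>x. (F @ fst x, snd x)) (mset (LL G))"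
proof -
  have "LL (F@G) = concat (map (\<lambda>p. map (\<lambda>q. (fst q, snd q, snd p @ G)) (P (fst p))) (P F))
     @ concat (map (\<lambda>p. map (\<lambda>q. (fst q, snd q @ fst p, snd p)) (P F) @ map (\<lambda>q. (F @ fst q, snd q, snd p)) (P (fst p))) (P G))"
    by (simp add: LL_def P_append comp_def)
  moreover have "map (\<lambda>x. (fst x, fst (snd x), snd (snd x) @ G)) (LL F) = concat (map (\<lambda>p. map (\<lambda>q. (fst q, snd q, snd p @ G)) (P (fst p))) (P F))"
    by (simp add: LL_def map_concat comp_def)
  moreover have "map (\<lambda>x. (F @ fst x, snd x)) (LL G) = concat (map (\<lambda>p. map (\<lambda>q. (F @ fst q, snd q, snd p)) (P (fst p))) (P G))"
    by (simp add: LL_def map_concat comp_def)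
  ultimately show ?thesis
    by (simp add: mset_concat_app flip: mset_map)
qed

lemma RR_append: "mset (RR (F @ G)) = image_mset (\<lambda>x. (fst x, fst (snd x), snd (snd x) @ G)) (mset (RR F))
   + mset (concat (map (\<lambda>q. map (\<lambda>p. (fst q, snd q @ fst p, snd p)) (P G)) (P F)))
   + image_mset (\<lambda>x. (F @ fst x, snd x)) (mset (RR G))"
proof -
  have "RR (F@G) = concat (map (\<lambda>p. map (\<lambda>q. (fst p, fst q, snd q @ G)) (Dl (snd p)) @ map (\<lambda>q. (fst p, snd p @ fst q, snd q)) (P G)) (P F))
     @ concat (map (\<lambda>p. map (\<lambda>q. (F @ fst p, fst q, snd q)) (Dl (snd p))) (P G))"
    by (simp add: RR_def P_append comp_def Dl_def)
  moreover have "map (\<lambda>x. (fst x, fst (snd x), snd (snd x) @ G)) (RR F) = concat (map (\<lambda>p. map (\<lambda>q. (fst p, fst q, snd q @ G)) (Dl (snd p))) (P F))"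
    by (simp add: RR_def map_concat comp_def)
  moreover have "map (\<lambda>x. (F @ fst x, snd x)) (RR G) = concat (map (\<lambda>p. map (\<lambda>q. (F @ fst p, fst q, snd q)) (Dl (snd p))) (P G))"
    by (simp add: RR_def map_concat comp_def)
  ultimately show ?thesis
    by (simp add: mset_concat_app flip: mset_map)
qed

lemma LL_RR_tree:
  assumes "mset (LL G) = mset (RR G)"
  shows "mset (LL [PNode G]) = mset (RR [PNode G])"
proof -
  have l: "LL [PNode G] = (([PNode G],[],[]) # map (\<lambda>p. (fst p, [PNode (snd p)], [])) (P G))
      @ map (\<lambda>x. (fst x, fst (snd x), [PNode (snd (snd x))])) (LL G)"
    by (simp add: LL_def P_single comp_def map_concat)
  have r: "RR [PNode G] = ([PNode G],[],[]) # concat (map (\<lambda>p. (fst p, [], [PNode (snd p)]) # (fst p, [PNode (snd p)], [])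
       # map (\<lambda>q. (fst p, fst q, [PNode (snd q)])) (P (snd p))) (P G))"
    by (simp add: RR_def P_single comp_def Dl_def)
  have r2: "mset (map (\<lambda>x. (fst x, fst (snd x), [PNode (snd (snd x))])) (RR G)) =
     mset (map (\<lambda>p. (fst p, [], [PNode (snd p)])) (P G)) + mset (concat (map (\<lambda>p. map (\<lambda>q. (fst p, fst q, [PNode (snd q)])) (P (snd p))) (P G)))"
    by (simp add: RR_def map_concat comp_def Dl_def mset_concat_cons)
  have "mset (LL [PNode G]) = {#([PNode G],[],[])#} + mset (map (\<lambda>p. (fst p, [PNode (snd p)], [])) (P G))
     + mset (map (\<lambda>x. (fst x, fst (snd x), [PNode (snd (snd x))])) (RR G))"
    unfolding l using assms by simp
  also have "\<dots> = mset (RR [PNode G])"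
    unfolding r r2 by (simp add: mset_concat_cons)
  finally show ?thesis .
qed

lemma LL_RR: "mset (LL F) = mset (RR F)"
proof (induction F rule: P.induct)
  case 1 then show ?case by (simp add: LL_def RR_def)
next
  case (2 G F)
  have t: "mset (LL [PNode G]) = mset (RR [PNode G])" by (rule LL_RR_tree) fact
  have f: "mset (LL F) = mset (RR F)" by fact
  have x: "mset (concat (map (\<lambda>p. map (\<lambda>q. (fst q, snd q @ fst p, snd p)) (P [PNode G])) (P F))) = mset (concat (map (\<lambda>q. map (\<lambda>p. (fst q, snd q @ fst p, snd p)) (P F)) (P [PNode G])))"
    by (rule mset_swap)
  have "mset (LL ([PNode G] @ F)) = mset (RR ([PNode G] @ F))"
    unfolding LL_append RR_append t f x by (rule refl)
  then show ?case by simp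
qed



definition bilinear :: "(('a \<Rightarrow>\<^sub>0 'k::field) \<Rightarrow> ('b \<Rightarrow>\<^sub>0 'k) \<Rightarrow> ('c \<Rightarrow>\<^sub>0 'k)) \<Rightarrow> bool" where
  "bilinear B \<longleftrightarrow> (\<forall>b. linear_map (\<lambda>a. B a b)) \<and> (\<forall>a. linear_map (\<lambda>b. B a b))"

lemma bilinear_lext_gen:
  assumes "\<And>x. linear_map (h x)"
  shows "bilinear (\<lambda>a b. lext (\<lambda>x. h x b) a)"
  unfolding bilinear_def
proof (intro conjI allI)
  fix b show "linear_map (\<lambda>a. lext (\<lambda>x. h x b) a)" by (rule linear_lext)
next
  fix a
  have add: "h x (b1 + b2) = h x b1 + h x b2" for x b1 b2 using assms[of x] by (simp add: linear_map_def)
  have sm: "h x (smul c b) = smul c (h x b)" for x c b using assms[of x] by (simp add: linear_map_def)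
  show "linear_map (\<lambda>b. lext (\<lambda>x. h x b) a)"
    unfolding linear_map_def by (simp add: add sm lext_fun_add lext_fun_smul)
qed

lemma bilinear_lext2: "bilinear (\<lambda>a b. lext (\<lambda>x. lext (g x) b) a)"
  by (rule bilinear_lext_gen) (rule linear_lext)

lemma bilinear_linl: "bilinear B \<Longrightarrow> linear_map (\<lambda>a. B a b)"
  by (simp add: bilinear_def)
lemma bilinear_linr: "bilinear B \<Longrightarrow> linear_map (\<lambda>b. B a b)"
  by (simp add: bilinear_def)

lemma bilinear_repr:
  assumes "bilinear B"
  shows "B a b = lext (\<lambda>F. lext (\<lambda>G. B (Poly_Mapping.single F 1) (Poly_Mapping.single G 1)) b) a"
proof -
  have "B a b = lext (\<lambda>F. B (Poly_Mapping.single F 1) b) a"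
    by (rule linear_repr[OF bilinear_linl[OF assms]])
  also have "\<dots> = lext (\<lambda>F. lext (\<lambda>G. B (Poly_Mapping.single F 1) (Poly_Mapping.single G 1)) b) a"
    by (rule lext_cong) (rule linear_repr[OF bilinear_linr[OF assms]])
  finally show ?thesis .
qed

lemma bilinear_eq:
  assumes "bilinear B1" "bilinear B2"
    "\<And>F G. B1 (Poly_Mapping.single F 1) (Poly_Mapping.single G 1) = B2 (Poly_Mapping.single F 1) (Poly_Mapping.single G 1)"
  shows "B1 a b = B2 a b"
proof -
  have "B1 a b = lext (\<lambda>F. lext (\<lambda>G. B1 (Poly_Mapping.single F 1) (Poly_Mapping.single G 1)) b) a"
    by (rule bilinear_repr[OF assms(1)])
  also have "\<dots> = lext (\<lambda>F. lext (\<lambda>G. B2 (Poly_Mapping.single F 1) (Poly_Mapping.single G 1)) b) a"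
    by (simp only: assms(3))
  also have "\<dots> = B2 a b"
    by (rule bilinear_repr[OF assms(2), symmetric])
  finally show ?thesis .
qed

lemma bilinear_comp:
  "bilinear B \<Longrightarrow> linear_map \<phi> \<Longrightarrow> linear_map \<psi> \<Longrightarrow> bilinear (\<lambda>a b. B (\<phi> a) (\<psi> b))"
  unfolding bilinear_def linear_map_def by simp

lemma bilinear_post:
  "linear_map \<chi> \<Longrightarrow> bilinear B \<Longrightarrow> bilinear (\<lambda>a b. \<chi> (B a b))"
  unfolding bilinear_def linear_map_def by simp

lemma linear_add_fun: "linear_map \<phi> \<Longrightarrow> linear_map \<psi> \<Longrightarrow> linear_map (\<lambda>x. \<phi> x + \<psi> x)"
  by (simp add: linear_map_def smul_add_r algebra_simps)
lemma linear_diff_fun: "linear_map \<phi> \<Longrightarrow> linear_map \<psi> \<Longrightarrow> linear_map (\<lambda>x. \<phi> x - \<psi> x)"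
  by (simp add: linear_map_def smul_diff_r algebra_simps)
lemma linear_id: "linear_map (\<lambda>x. x)"
  by (simp add: linear_map_def)

lemma bilinear_add: "bilinear B1 \<Longrightarrow> bilinear B2 \<Longrightarrow> bilinear (\<lambda>a b. B1 a b + B2 a b)"
  unfolding bilinear_def by (auto intro: linear_add_fun)
lemma bilinear_diff: "bilinear B1 \<Longrightarrow> bilinear B2 \<Longrightarrow> bilinear (\<lambda>a b. B1 a b - B2 a b)"
  unfolding bilinear_def by (auto intro: linear_diff_fun)

lemma bilinear_hmult: "bilinear (hmult :: 'k::field H \<Rightarrow> _)"
  unfolding hmult_def[abs_def] by (rule bilinear_lext2)
lemma bilinear_tens: "bilinear (tens :: 'k::field H \<Rightarrow> _)"
  unfolding tens_def[abs_def] by (rule bilinear_lext2)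
lemma bilinear_tprod: "bilinear (tprod :: 'k::field H2 \<Rightarrow> _)"
  unfolding tprod_def[abs_def]
  apply (rule bilinear_lext_gen)
  subgoal for x by (cases x) (simp add: linear_lext)
  done
lemma bilinear_teps: "bilinear (teps_mult :: 'k::field H2 \<Rightarrow> _)"
  unfolding teps_mult_def[abs_def]
  apply (rule bilinear_lext_gen)
  subgoal for x by (cases x) (simp add: linear_lext)
  done

lemma hmult_basis[simp]: "hmult (Poly_Mapping.single F (1::'k::field)) (Poly_Mapping.single G 1) = Poly_Mapping.single (F @ G) 1"
  by (simp add: hmult_def basisH_def)
lemma tens_basis[simp]: "tens (Poly_Mapping.single F (1::'k::field)) (Poly_Mapping.single G 1) = Poly_Mapping.single (F, G) 1"
  by (simp add: tens_def)
lemma tprod_basis[simp]: "tprod (Poly_Mapping.single p (1::'k::field)) (Poly_Mapping.single q 1) = Poly_Mapping.single (fst p @ fst q, snd p @ snd q) 1"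
  by (simp add: tprod_def basisH_def split: prod.splits)

definition Teps :: "forest \<times> forest \<Rightarrow> forest \<times> forest \<Rightarrow> 'k::field H2" where
  "Teps p q = (if fst q = [] then Poly_Mapping.single (fst p, snd p @ snd q) 1 else 0)
     + (if snd p = [] then Poly_Mapping.single (fst p @ fst q, snd q) 1 else 0)
     - (if snd p = [] then (if fst q = [] then Poly_Mapping.single (fst p, snd q) 1 else 0) else 0)"

lemma epsH_basis[simp]: "epsH (Poly_Mapping.single F (1::'k::field)) = (if F = [] then 1 else 0)"
  by (simp add: epsH_def lookup_single when_def)

lemma teps_basis: "teps_mult (Poly_Mapping.single p (1::'k::field)) (Poly_Mapping.single q 1) = Teps p q"
proof -
  have "teps_mult (Poly_Mapping.single p (1::'k)) (Poly_Mapping.single q 1) =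
     smul (epsH (Poly_Mapping.single (fst q) (1::'k))) (Poly_Mapping.single (fst p, snd p @ snd q) 1)
   + smul (epsH (Poly_Mapping.single (snd p) (1::'k))) (Poly_Mapping.single (fst p @ fst q, snd q) 1)
   - smul (epsH (Poly_Mapping.single (fst q) (1::'k)) * epsH (Poly_Mapping.single (snd p) (1::'k))) (Poly_Mapping.single (fst p, snd q) 1)"
  proof (cases p, cases q)
    fix F1 G1 F2 G2 assume pq: "p = (F1, G1)" "q = (F2, G2)"
    show ?thesis unfolding teps_mult_def lext_single smul_one pq prod.case Let_def basisH_def fst_conv snd_conv
      tens_basis hmult_basis by (rule refl)
  qed
  then show ?thesis
    by (cases "fst q = []"; cases "snd p = []") (simp_all add: Teps_def)
qed


definition S :: "'a list \<Rightarrow> ('a \<Rightarrow>\<^sub>0 'k::field)" where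
  "S xs = sum_list (map (\<lambda>p. Poly_Mapping.single p 1) xs)"

lemma S_Nil[simp]: "S [] = 0" by (simp add: S_def)
lemma S_Cons[simp]: "S (x # xs) = Poly_Mapping.single x 1 + S xs" by (simp add: S_def)
lemma S_append[simp]: "S (xs @ ys) = S xs + S ys" by (simp add: S_def)
lemma S_concat: "S (concat xss) = sum_list (map S xss)" by (induction xss) auto
lemma S_map: "S (map f xs) = sum_list (map (\<lambda>x. Poly_Mapping.single (f x) 1) xs)"
  by (simp add: S_def comp_def)

lemma lext_S: "lext \<phi> (S xs) = sum_list (map \<phi> xs)"
  by (induction xs) (auto simp: lext_add)

lemma S_mset: "mset xs = mset ys \<Longrightarrow> S xs = S ys"
  unfolding S_def by (metis mset_map sum_mset_sum_list)

lemma keys_S: "Poly_Mapping.keys (S xs) \<subseteq> set xs"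
proof (induction xs)
  case Nil then show ?case by simp
next
  case (Cons x xs) then show ?case using keys_add[of "Poly_Mapping.single x 1" "S xs"] by auto
qed

lemma linear_sum_list2: "linear_map \<phi> \<Longrightarrow> \<phi> (sum_list (map f xs)) = sum_list (map (\<lambda>x. \<phi> (f x)) xs)"
  by (simp add: linear_sum_list comp_def)

lemma bilinear_S:
  assumes "bilinear B"
  shows "B (S xs) (S ys) = sum_list (map (\<lambda>p. sum_list (map (\<lambda>q. B (Poly_Mapping.single p 1) (Poly_Mapping.single q 1)) ys)) xs)"
proof -
  have "B (S xs) (S ys) = sum_list (map (\<lambda>p. B (Poly_Mapping.single p 1) (S ys)) xs)"
    unfolding S_def by (rule linear_sum_list2[OF bilinear_linl[OF assms]])
  also have "\<dots> = sum_list (map (\<lambda>p. sum_list (map (\<lambda>q. B (Poly_Mapping.single p 1) (Poly_Mapping.single q 1)) ys)) xs)"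
    unfolding S_def by (simp add: linear_sum_list2[OF bilinear_linr[OF assms]])
  finally show ?thesis .
qed

lemma sum_list_zero_map: "sum_list (map (\<lambda>x. 0) xs) = (0::'a::comm_monoid_add)"
  by (induction xs) auto

lemma sum_if_filter: "sum_list (map (\<lambda>x. if Q x then f x else 0) xs) = sum_list (map f (filter Q xs))"
  by (induction xs) auto

lemma sum_if_const: "sum_list (map (\<lambda>x. if c then f x else 0) xs) = (if c then sum_list (map f xs) else (0::'a::comm_monoid_add))"
  by (cases c) (auto simp: sum_list_zero_map)

lemma Dl_fst: "sum_list (map (\<lambda>q. if fst q = [] then f q else 0) (Dl G)) = (f ([],G) :: 'a::comm_monoid_add)"
proof -
  have "sum_list (map (\<lambda>q. if fst q = [] then f q else 0) (P G)) = sum_list (map (\<lambda>q. 0) (P G))"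
    by (rule arg_cong[where f=sum_list], rule map_cong) (auto dest: P_fst_ne)
  then have h: "sum_list (map (\<lambda>q. if fst q = [] then f q else 0) (P G)) = 0"
    by (metis sum_list_zero_map)
  show ?thesis by (simp add: Dl_def h)
qed

lemma Dl_snd: "sum_list (map (\<lambda>p. if snd p = [] then f p else 0) (Dl F)) = (f (F,[]) :: 'a::comm_monoid_add)"
  by (simp add: sum_if_filter Dl_filter_snd)

definition D :: "forest \<Rightarrow> 'k::field H2" where
  "D F = S (Dl F)"

lemma D_append: "D (F @ G) = S (map (\<lambda>p. (fst p, snd p @ G)) (Dl F)) + S (map (\<lambda>p. (F @ fst p, snd p)) (Dl G))
   - (Poly_Mapping.single (F, G) 1 :: 'k::field H2)"
  by (simp add: D_def Dl_def P_append)

lemma teps_D: "teps_mult (D F) (D G) = (D (F @ G) :: 'k::field H2)"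
proof -
  have "teps_mult (D F) (D G) = sum_list (map (\<lambda>p. sum_list (map (\<lambda>q. Teps p q :: 'k H2) (Dl G))) (Dl F))"
    unfolding D_def by (simp add: bilinear_S[OF bilinear_teps] teps_basis)
  also have "\<dots> = D (F @ G)"
    by (simp add: Teps_def sum_list_addf sum_list_subtractf sum_if_const Dl_fst Dl_snd D_append S_map)
  finally show ?thesis .
qed


lemma Bplus_basis[simp]: "Bplus (Poly_Mapping.single F (1::'k::field)) = Poly_Mapping.single [PNode F] 1"
  by (simp add: Bplus_def basisH_def)

lemma linear_Bplus: "linear_map (Bplus :: 'k::field H \<Rightarrow> _)"
  unfolding Bplus_def by (rule linear_lext)

lemma linear_tmap: "linear_map (tmap \<phi> \<psi>)"
  unfolding tmap_def by (rule linear_lext)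

lemma tmap_S: "tmap \<phi> \<psi> (S xs) = sum_list (map (\<lambda>p. tens (\<phi> (basisH (fst p))) (\<psi> (basisH (snd p)))) xs)"
  by (simp add: tmap_def lext_S split_def)

lemma tens_zero_r[simp]: "tens a (0::'k::field H) = 0"
  by (rule linear_zero[OF bilinear_linr[OF bilinear_tens]])

lemma tm1: "tens (id (basisH a)) (Bplus (basisH b)) = (Poly_Mapping.single (a, [PNode b]) 1 :: 'k::field H2)"
  by (simp add: basisH_def)

lemma tm2: "tens (Bplus (basisH a)) ((nu \<circ> epsH) (basisH b)) = (if b = [] then Poly_Mapping.single ([PNode a], []) 1 else (0 :: 'k::field H2))"
  by (cases "b = []") (simp_all add: basisH_def nu_def unitH_def)

lemma D_Bplus: "D [PNode F] = tmap id Bplus (D F) + tmap Bplus (nu \<circ> epsH) (D F :: 'k::field H2)"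
proof -
  have "tmap Bplus (nu \<circ> epsH) (D F :: 'k H2) = Poly_Mapping.single ([PNode F], []) 1"
    unfolding D_def tmap_S tm2 by (simp add: Dl_snd)
  moreover have "tmap id Bplus (D F :: 'k H2) = S (map (\<lambda>p. (fst p, [PNode (snd p)])) (Dl F))"
    unfolding D_def tmap_S tm1 by (simp add: S_map)
  ultimately show ?thesis
    by (simp add: D_def Dl_def P_single algebra_simps)
qed

lemma D_Nil: "D [] = (Poly_Mapping.single ([],[]) 1 :: 'k::field H2)"
  by (simp add: D_def Dl_def)

lemma Delta_basis:
  assumes "is_Delta (\<Delta> :: 'k::field H \<Rightarrow> 'k H2)"
  shows "\<Delta> (Poly_Mapping.single F 1) = D F"
proof (induction F rule: P.induct)
  case 1
  have "\<Delta> unitH = tens unitH unitH" using assms by (simp add: is_Delta_def)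
  then show ?case by (simp add: unitH_def basisH_def D_Nil)
next
  case (2 G F)
  have g: "\<Delta> (Poly_Mapping.single G 1) = D G" by fact
  have f: "\<Delta> (Poly_Mapping.single F 1) = D F" by fact
  have t: "\<Delta> (Poly_Mapping.single [PNode G] 1) = D [PNode G]"
  proof -
    have "\<Delta> (Poly_Mapping.single [PNode G] 1) = \<Delta> (Bplus (Poly_Mapping.single G 1))" by simp
    also have "\<dots> = tmap id Bplus (D G) + tmap Bplus (nu \<circ> epsH) (D G)"
      using assms g unfolding is_Delta_def by (simp del: Bplus_basis)
    finally show ?thesis by (simp add: D_Bplus)
  qed
  have "\<Delta> (Poly_Mapping.single (PNode G # F) 1) = \<Delta> (hmult (Poly_Mapping.single [PNode G] 1) (Poly_Mapping.single F 1))"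
    by simp
  also have "\<dots> = teps_mult (D [PNode G]) (D F)"
    using assms t f unfolding is_Delta_def by (simp del: hmult_basis)
  also have "\<dots> = D (PNode G # F)" by (simp add: teps_D)
  finally show ?case .
qed

lemma Delta_eq:
  assumes "is_Delta (\<Delta> :: 'k::field H \<Rightarrow> 'k H2)"
  shows "\<Delta> = lext D"
proof
  fix a
  have "linear_map \<Delta>" using assms by (simp add: is_Delta_def)
  then have "\<Delta> a = lext (\<lambda>x. \<Delta> (Poly_Mapping.single x 1)) a" by (rule linear_repr)
  then show "\<Delta> a = lext D a" by (simp add: Delta_basis[OF assms])
qed

lemma lext_D_basis[simp]: "lext D (Poly_Mapping.single F (1::'k::field)) = D F"
  by simp

lemma is_Delta_D: "is_Delta (lext D :: 'k::field H \<Rightarrow> 'k H2)"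
  unfolding is_Delta_def
proof (intro conjI allI)
  show "linear_map (lext D :: 'k H \<Rightarrow> 'k H2)" by (rule linear_lext)
  show "lext D unitH = (tens unitH unitH :: 'k H2)"
    by (simp add: unitH_def basisH_def D_Nil)
  fix a b :: "'k H"
  show "lext D (hmult a b) = teps_mult (lext D a) (lext D b)"
  proof (rule bilinear_eq[of "\<lambda>a b. lext D (hmult a b)" "\<lambda>a b. teps_mult (lext D a) (lext D b)"])
    show "bilinear (\<lambda>a b. lext D (hmult a b) :: 'k H2)"
      by (rule bilinear_post[OF linear_lext bilinear_hmult])
    show "bilinear (\<lambda>a b. teps_mult (lext D a) (lext D b) :: 'k H2)"
      by (rule bilinear_comp[OF bilinear_teps linear_lext linear_lext])
    fix F G
    show "lext D (hmult (Poly_Mapping.single F 1) (Poly_Mapping.single G (1::'k))) =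
        teps_mult (lext D (Poly_Mapping.single F 1)) (lext D (Poly_Mapping.single G 1))"
      by (simp add: teps_D)
  qed
next
  fix a :: "'k H"
  show "lext D (Bplus a) = tmap id Bplus (lext D a) + tmap Bplus (nu \<circ> epsH) (lext D a)"
  proof (rule linear_eq[where \<phi>="\<lambda>a. lext D (Bplus a)" and \<psi>="\<lambda>a. tmap id Bplus (lext D a) + tmap Bplus (nu \<circ> epsH) (lext D a)"])
    show "linear_map (\<lambda>a. lext D (Bplus a) :: 'k H2)"
      by (rule linear_comp[OF linear_lext linear_Bplus])
    show "linear_map (\<lambda>a. tmap id Bplus (lext D a) + tmap Bplus (nu \<circ> epsH) (lext D a) :: 'k H2)"
      by (rule linear_add_fun; rule linear_comp[OF linear_tmap linear_lext])
    fix F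
    show "lext D (Bplus (Poly_Mapping.single F 1)) = tmap id Bplus (lext D (Poly_Mapping.single F 1)) + tmap Bplus (nu \<circ> epsH) (lext D (Poly_Mapping.single F (1::'k)))"
      by (simp add: D_Bplus)
  qed
qed


lemma linear_hmult_l: "linear_map (\<lambda>a. hmult a b :: 'k::field H)"
  by (rule bilinear_linl[OF bilinear_hmult])
lemma linear_hmult_r: "linear_map (\<lambda>b. hmult a b :: 'k::field H)"
  by (rule bilinear_linr[OF bilinear_hmult])

lemma hmult_assoc: "hmult (hmult a b) c = hmult a (hmult b c :: 'k::field H)"
proof (rule linear_eq[where \<phi>="\<lambda>a. hmult (hmult a b) c" and \<psi>="\<lambda>a. hmult a (hmult b c)"])
  show "linear_map (\<lambda>a. hmult (hmult a b) c :: 'k H)"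
    by (rule linear_comp[OF linear_hmult_l linear_hmult_l])
  show "linear_map (\<lambda>a. hmult a (hmult b c) :: 'k H)" by (rule linear_hmult_l)
  fix F
  show "hmult (hmult (Poly_Mapping.single F 1) b) c = hmult (Poly_Mapping.single F (1::'k)) (hmult b c)"
  proof (rule linear_eq[where \<phi>="\<lambda>b. hmult (hmult (Poly_Mapping.single F 1) b) c" and \<psi>="\<lambda>b. hmult (Poly_Mapping.single F 1) (hmult b c)"])
    show "linear_map (\<lambda>b. hmult (hmult (Poly_Mapping.single F 1) b) c :: 'k H)"
      by (rule linear_comp[OF linear_hmult_l linear_hmult_r])
    show "linear_map (\<lambda>b. hmult (Poly_Mapping.single F 1) (hmult b c) :: 'k H)"
      by (rule linear_comp[OF linear_hmult_r linear_hmult_l])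
    fix G
    show "hmult (hmult (Poly_Mapping.single F 1) (Poly_Mapping.single G 1)) c = hmult (Poly_Mapping.single F (1::'k)) (hmult (Poly_Mapping.single G 1) c)"
    proof (rule linear_eq[where \<phi>="\<lambda>c. hmult (hmult (Poly_Mapping.single F 1) (Poly_Mapping.single G 1)) c" and \<psi>="\<lambda>c. hmult (Poly_Mapping.single F 1) (hmult (Poly_Mapping.single G 1) c)"])
      show "linear_map (\<lambda>c. hmult (hmult (Poly_Mapping.single F 1) (Poly_Mapping.single G 1)) c :: 'k H)"
        by (rule linear_hmult_r)
      show "linear_map (\<lambda>c. hmult (Poly_Mapping.single F 1) (hmult (Poly_Mapping.single G 1) c) :: 'k H)"
        by (rule linear_comp[OF linear_hmult_r linear_hmult_r])
    qed simp
  qed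
qed

lemma hmult_unit_l: "hmult unitH a = (a :: 'k::field H)"
  by (rule linear_eq[where \<phi>="\<lambda>a. hmult unitH a" and \<psi>="\<lambda>a. a"])
     (simp_all add: linear_hmult_r linear_id unitH_def basisH_def)
lemma hmult_unit_r: "hmult a unitH = (a :: 'k::field H)"
  by (rule linear_eq[where \<phi>="\<lambda>a. hmult a unitH" and \<psi>="\<lambda>a. a"])
     (simp_all add: linear_hmult_l linear_id unitH_def basisH_def)

lemma lext_D_delta: "lext D (basisH F) = (D F :: 'k::field H2)"
  by (simp add: basisH_def)

lemma delta_id_D: "delta_id (lext D) (D F :: 'k::field H2) =
   S (concat (map (\<lambda>p. map (\<lambda>q. (fst q, snd q, snd p)) (Dl (fst p))) (Dl F)))"
  by (simp add: delta_id_def lext_D_delta D_def lext_S split_def S_concat comp_def S_map)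

lemma id_delta_D: "id_delta (lext D) (D F :: 'k::field H2) =
   S (concat (map (\<lambda>p. map (\<lambda>q. (fst p, fst q, snd q)) (Dl (snd p))) (Dl F)))"
  by (simp add: id_delta_def lext_D_delta D_def lext_S split_def S_concat comp_def S_map)

lemma coassoc_mset: "mset (concat (map (\<lambda>p. map (\<lambda>q. (fst q, snd q, snd p)) (Dl (fst p))) (Dl F))) =
   mset (concat (map (\<lambda>p. map (\<lambda>q. (fst p, fst q, snd q)) (Dl (snd p))) (Dl F)))"
proof -
  have l: "mset (concat (map (\<lambda>p. map (\<lambda>q. (fst q, snd q, snd p)) (Dl (fst p))) (Dl F))) =
     {#([],[],F)#} + mset (map (\<lambda>p. ([], fst p, snd p)) (P F)) + mset (LL F)"
    by (simp add: Dl_def LL_def mset_concat_cons)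
  have r: "mset (concat (map (\<lambda>p. map (\<lambda>q. (fst p, fst q, snd q)) (Dl (snd p))) (Dl F))) =
     {#([],[],F)#} + mset (map (\<lambda>p. ([], fst p, snd p)) (P F)) + mset (RR F)"
    by (simp add: Dl_def RR_def comp_def)
  show ?thesis unfolding l r LL_RR ..
qed

lemma eps_id_D: "eps_id (D F) = (Poly_Mapping.single F 1 :: 'k::field H)"
proof -
  have "eps_id (D F :: 'k H2) = sum_list (map (\<lambda>p. if fst p = [] then Poly_Mapping.single (snd p) 1 else 0) (Dl F))"
    unfolding eps_id_def D_def lext_S split_def
    by (rule arg_cong[where f=sum_list], rule map_cong) (simp_all add: basisH_def)
  also have "\<dots> = Poly_Mapping.single F 1" by (simp add: Dl_fst)
  finally show ?thesis .
qed

lemma id_eps_D: "id_eps (D F) = (Poly_Mapping.single F 1 :: 'k::field H)"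
proof -
  have "id_eps (D F :: 'k H2) = sum_list (map (\<lambda>p. if snd p = [] then Poly_Mapping.single (fst p) 1 else 0) (Dl F))"
    unfolding id_eps_def D_def lext_S split_def
    by (rule arg_cong[where f=sum_list], rule map_cong) (simp_all add: basisH_def)
  also have "\<dots> = Poly_Mapping.single F 1" by (simp add: Dl_snd)
  finally show ?thesis .
qed

lemma infinitesimal_basis:
  "D (F @ G) = tprod (D F) (tens unitH (Poly_Mapping.single G 1)) + tprod (tens (Poly_Mapping.single F 1) unitH) (D G)
     - tens (Poly_Mapping.single F 1) (Poly_Mapping.single G (1::'k::field))"
proof -
  have a: "tprod (D F) (tens unitH (Poly_Mapping.single G 1)) = (S (map (\<lambda>p. (fst p, snd p @ G)) (Dl F)) :: 'k H2)"
  proof -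
    have "tprod (D F) (tens unitH (Poly_Mapping.single G 1)) = tprod (S (Dl F)) (S [([],G)] :: 'k H2)"
      by (simp add: D_def unitH_def basisH_def)
    also have "\<dots> = S (map (\<lambda>p. (fst p, snd p @ G)) (Dl F))"
      unfolding bilinear_S[OF bilinear_tprod] by (simp add: S_map)
    finally show ?thesis .
  qed
  have b: "tprod (tens (Poly_Mapping.single F 1) unitH) (D G) = (S (map (\<lambda>p. (F @ fst p, snd p)) (Dl G)) :: 'k H2)"
  proof -
    have "tprod (tens (Poly_Mapping.single F 1) unitH) (D G) = tprod (S [(F,[])]) (S (Dl G) :: 'k H2)"
      by (simp add: D_def unitH_def basisH_def)
    also have "\<dots> = S (map (\<lambda>p. (F @ fst p, snd p)) (Dl G))"
      unfolding bilinear_S[OF bilinear_tprod] by (simp add: S_map)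
    finally show ?thesis .
  qed
  show ?thesis unfolding a b by (simp add: D_append)
qed

lemma keys_smul: "Poly_Mapping.keys (smul c a) \<subseteq> Poly_Mapping.keys a"
  by (auto simp: in_keys_iff)

lemma graded_D: "weight_graded (lext D :: 'k::field H \<Rightarrow> 'k H2)"
  unfolding weight_graded_def
proof (intro allI impI ballI)
  fix n and a :: "'k H" and p
  assume w: "\<forall>F\<in>Poly_Mapping.keys a. weight F = n" and p: "p \<in> Poly_Mapping.keys (lext D a)"
  have "Poly_Mapping.keys (lext D a) \<subseteq> (\<Union>F\<in>Poly_Mapping.keys a. Poly_Mapping.keys (smul (Poly_Mapping.lookup a F) (D F :: 'k H2)))"
    unfolding lext_def by (rule keys_sum)
  also have "\<dots> \<subseteq> (\<Union>F\<in>Poly_Mapping.keys a. set (Dl F))"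
    using keys_smul keys_S unfolding D_def by fast
  finally obtain F where "F \<in> Poly_Mapping.keys a" "p \<in> set (Dl F)" using p by blast
  then show "weight (fst p) + weight (snd p) = n" using w Dl_weight by auto
qed

lemma inf_D: "inf_bialgebra (lext D :: 'k::field H \<Rightarrow> 'k H2)"
  unfolding inf_bialgebra_def
proof (intro conjI allI)
  show "linear_map (lext D :: 'k H \<Rightarrow> 'k H2)" by (rule linear_lext)
  fix a b c :: "'k H"
  show "hmult (hmult a b) c = hmult a (hmult b c)" by (rule hmult_assoc)
  show "hmult unitH a = a" by (rule hmult_unit_l)
  show "hmult a unitH = a" by (rule hmult_unit_r)
  show "delta_id (lext D) (lext D a) = id_delta (lext D) (lext D a)"
  proof (rule linear_eq[where \<phi>="\<lambda>a. delta_id (lext D) (lext D a)" and \<psi>="\<lambda>a. id_delta (lext D) (lext D a)"])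
    show "linear_map (\<lambda>a. delta_id (lext D) (lext D a :: 'k H2))"
      unfolding delta_id_def by (rule linear_comp[OF linear_lext linear_lext])
    show "linear_map (\<lambda>a. id_delta (lext D) (lext D a :: 'k H2))"
      unfolding id_delta_def by (rule linear_comp[OF linear_lext linear_lext])
    fix F
    show "delta_id (lext D) (lext D (Poly_Mapping.single F 1)) = id_delta (lext D) (lext D (Poly_Mapping.single F (1::'k)))"
      by (simp add: delta_id_D id_delta_D S_mset[OF coassoc_mset])
  qed
  show "eps_id (lext D a) = a"
  proof (rule linear_eq[where \<phi>="\<lambda>a. eps_id (lext D a)" and \<psi>="\<lambda>a. a"])
    show "linear_map (\<lambda>a. eps_id (lext D a :: 'k H2))"
      unfolding eps_id_def by (rule linear_comp[OF linear_lext linear_lext])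
  qed (simp_all add: eps_id_D linear_id)
  show "id_eps (lext D a) = a"
  proof (rule linear_eq[where \<phi>="\<lambda>a. id_eps (lext D a)" and \<psi>="\<lambda>a. a"])
    show "linear_map (\<lambda>a. id_eps (lext D a :: 'k H2))"
      unfolding id_eps_def by (rule linear_comp[OF linear_lext linear_lext])
  qed (simp_all add: id_eps_D linear_id)
  show "lext D (hmult a b) = tprod (lext D a) (tens unitH b) + tprod (tens a unitH) (lext D b) - tens a b"
  proof (rule bilinear_eq[of "\<lambda>a b. lext D (hmult a b)" "\<lambda>a b. tprod (lext D a) (tens unitH b) + tprod (tens a unitH) (lext D b) - tens a b"])
    show "bilinear (\<lambda>a b. lext D (hmult a b) :: 'k H2)"
      by (rule bilinear_post[OF linear_lext bilinear_hmult])
    show "bilinear (\<lambda>a b. tprod (lext D a) (tens unitH b) + tprod (tens a unitH) (lext D b) - tens a b :: 'k H2)"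
      by (rule bilinear_diff[OF bilinear_add[OF bilinear_comp[OF bilinear_tprod linear_lext bilinear_linr[OF bilinear_tens]]
           bilinear_comp[OF bilinear_tprod bilinear_linl[OF bilinear_tens] linear_lext]] bilinear_tens])
    fix F G
    show "lext D (hmult (Poly_Mapping.single F 1) (Poly_Mapping.single G 1)) =
      tprod (lext D (Poly_Mapping.single F 1)) (tens unitH (Poly_Mapping.single G 1)) +
      tprod (tens (Poly_Mapping.single F 1) unitH) (lext D (Poly_Mapping.single G 1)) -
      tens (Poly_Mapping.single F 1) (Poly_Mapping.single G (1::'k))"
      using infinitesimal_basis[of F G] by simp
  qed
qed

theorem theorem9:
  shows "(\<exists>\<Delta> :: 'k::field H \<Rightarrow> 'k H2. is_Delta \<Delta>)
    \<and> (\<forall>\<Delta> :: 'k::field H \<Rightarrow> 'k H2. is_Delta \<Delta> \<longrightarrow> inf_bialgebra \<Delta> \<and> weight_graded \<Delta>)"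
  using is_Delta_D Delta_eq inf_D graded_D by blast

end
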